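(* Let $A$ be a unital $C^*$-algebra and let $k>1$ be an integer. Suppose $e_1,\dots,e_k\in A$ are mutually orthogonal projections and $u\in U(A)$ is a unitary with $u^*e_iu=e_{i+1}$ for $i=1,\dots,k$, where $e_{k+1}=e_1$. Suppose $B$ is a finite dimensional $C^*$-subalgebra of $e_1Ae_1$ and $z\in U_0(e_1Ae_1)$ satisfies $z^*(u^k)^*bu^kz=b$ for all $b\in B$, and that $z=z_1z_2\cdots z_{k-1}$ with $z_i\in U(e_1Ae_1)$ for $i=1,\dots,k-1$; set $z_k=e_1$ (the unit of $e_1Ae_1$). Define $$w=\sum_{i=1}^k e_iu^{k+1-i}z_i(u^{k-i})^*+\Big(1-\sum_{i=1}^k e_i\Big)u.$$ Then $\|w-u\|\le\max\{\|z_i-e_1\|:1\le i\le k-1\}$, $(w^i)^*e_1w^i=e_{i+1}$ for $i=1,\dots,k-1$, and $(w^k)^*bw^k=b$ for all $b\in B$.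
   Context: $U(D)$ denotes the unitary group of a unital $C^*$-algebra $D$ and $U_0(D)$ the connected component of its identity; $e_1Ae_1$ is a unital $C^*$-algebra with unit $e_1$. *)

theory Defs
  imports "HOL-Analysis.Analysis"
begin

class cstar_algebra = real_normed_algebra_1 + banach +
  fixes scaleC :: "complex \<Rightarrow> 'a \<Rightarrow> 'a"
    and cstar :: "'a \<Rightarrow> 'a"
  assumes scaleC_of_real: "scaleC (complex_of_real r) x = scaleR r x"
    and scaleC_add_right: "scaleC c (x + y) = scaleC c x + scaleC c y"
    and scaleC_add_left: "scaleC (c + d) x = scaleC c x + scaleC d x"
    and scaleC_scaleC: "scaleC c (scaleC d x) = scaleC (c * d) x"
    and scaleC_one: "scaleC 1 x = x"
    and norm_scaleC: "norm (scaleC c x) = cmod c * norm x"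
    and scaleC_mult_left: "scaleC c (x * y) = scaleC c x * y"
    and scaleC_mult_right: "scaleC c (x * y) = x * scaleC c y"
    and cstar_cstar: "cstar (cstar x) = x"
    and cstar_add: "cstar (x + y) = cstar x + cstar y"
    and cstar_scaleC: "cstar (scaleC c x) = scaleC (cnj c) (cstar x)"
    and cstar_mult: "cstar (x * y) = cstar y * cstar x"
    and cstar_identity: "norm (cstar x * x) = (norm x)\<^sup>2"

definition projection :: "'a::cstar_algebra \<Rightarrow> bool" where
  "projection p \<longleftrightarrow> p * p = p \<and> cstar p = p"

definition unitary :: "'a::cstar_algebra \<Rightarrow> bool" where
  "unitary u \<longleftrightarrow> cstar u * u = 1 \<and> u * cstar u = 1"

definition corner :: "'a::cstar_algebra \<Rightarrow> 'a set" where
  "corner p = {p * a * p | a. True}"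

definition corner_unitaries :: "'a::cstar_algebra \<Rightarrow> 'a set" where
  "corner_unitaries p = {v \<in> corner p. cstar v * v = p \<and> v * cstar v = p}"

definition corner_unitaries0 :: "'a::cstar_algebra \<Rightarrow> 'a set" where
  "corner_unitaries0 p = connected_component_set (corner_unitaries p) p"

definition cspan :: "'a::cstar_algebra set \<Rightarrow> 'a set" where
  "cspan S = {x. \<exists>F c. finite F \<and> F \<subseteq> S \<and> x = (\<Sum>f\<in>F. scaleC (c f) f)}"

definition cstar_subalgebra :: "'a::cstar_algebra set \<Rightarrow> bool" where
  "cstar_subalgebra B \<longleftrightarrow> 0 \<in> B \<and> (\<forall>x\<in>B. \<forall>y\<in>B. x + y \<in> B \<and> x * y \<in> B)
     \<and> (\<forall>c. \<forall>x\<in>B. scaleC c x \<in> B) \<and> (\<forall>x\<in>B. cstar x \<in> B) \<and> closed B"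

definition finite_dimensional :: "'a::cstar_algebra set \<Rightarrow> bool" where
  "finite_dimensional B \<longleftrightarrow> (\<exists>F. finite F \<and> B \<subseteq> cspan F)"

end

theory Submission
  imports Defs
begin


lemma cstar_zero: "cstar (0::'a::cstar_algebra) = 0"
proof -
  have "cstar (0::'a) = cstar 0 + cstar 0" using cstar_add[of "0::'a" 0] by simp
  then show ?thesis by simp
qed

lemma cstar_one: "cstar (1::'a::cstar_algebra) = 1"
proof -
  have "cstar (1::'a) = cstar 1 * cstar (cstar 1)" by (simp only: cstar_cstar mult_1_right)
  also have "\<dots> = cstar (cstar 1 * 1)" by (rule cstar_mult[symmetric])
  also have "\<dots> = 1" by (simp only: cstar_cstar mult_1_right)
  finally show ?thesis .
qed

lemma cstar_minus: "cstar (- x) = - cstar (x::'a::cstar_algebra)"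
proof -
  have "cstar (- x) + cstar x = 0" using cstar_add[of "-x" x] by (simp add: cstar_zero)
  then show ?thesis by (simp add: eq_neg_iff_add_eq_0)
qed

lemma cstar_diff: "cstar (x - y) = cstar x - cstar (y::'a::cstar_algebra)"
  using cstar_add[of x "-y"] by (simp add: cstar_minus)

lemma cstar_sum: "cstar (sum f A) = (\<Sum>i\<in>A. cstar (f i::'a::cstar_algebra))"
  by (induction A rule: infinite_finite_induct) (auto simp: cstar_zero cstar_add)

lemma cstar_power: "cstar (x ^ n) = cstar (x::'a::cstar_algebra) ^ n"
  by (induction n) (auto simp: cstar_one cstar_mult power_commutes)

lemma unitary_power: "unitary (u::'a::cstar_algebra) \<Longrightarrow> cstar (u^n) * u^n = 1 \<and> u^n * cstar (u^n) = 1"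
proof (induction n)
  case 0 then show ?case by (simp add: cstar_one)
next
  case (Suc n)
  have "cstar (u^Suc n) * u^Suc n = cstar u * (cstar (u ^ n) * u ^ n) * u"
    unfolding power_Suc2[of u n] by (simp add: cstar_mult mult.assoc)
  also have "\<dots> = 1" using Suc by (simp add: unitary_def)
  finally have 1: "cstar (u^Suc n) * u^Suc n = 1" .
  have "u^Suc n * cstar (u^Suc n) = u * (u ^ n * cstar (u ^ n)) * cstar u"
    unfolding power_Suc[of u n] by (simp add: cstar_mult mult.assoc)
  also have "\<dots> = 1" using Suc by (simp add: unitary_def)
  finally show ?case using 1 by simp
qed

lemma norm_unitary: "unitary (u::'a::cstar_algebra) \<Longrightarrow> norm u \<le> 1"
proof -
  assume "unitary u"
  then have "(norm u)\<^sup>2 = 1" using cstar_identity[of u] by (simp add: unitary_def)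
  then show ?thesis by (auto simp add: power2_eq_1_iff)
qed

lemma unitary_cstar: "unitary (u::'a::cstar_algebra) \<Longrightarrow> unitary (cstar u)"
  by (simp add: unitary_def cstar_cstar)

lemma norm_proj: "projection (p::'a::cstar_algebra) \<Longrightarrow> norm p \<le> 1"
proof -
  assume "projection p"
  then have "(norm p)\<^sup>2 = norm p" using cstar_identity[of p] by (simp add: projection_def)
  then have "norm p * (norm p - 1) = 0" by (simp add: power2_eq_square algebra_simps)
  then show ?thesis by auto
qed

lemma corner_mult: "projection (p::'a::cstar_algebra) \<Longrightarrow> x \<in> corner p \<Longrightarrow> p * x = x \<and> x * p = x"
  unfolding corner_def projection_def
  by (auto simp: mult.assoc[symmetric]) (simp add: mult.assoc)

lemma sum_sq_orth:
  fixes b :: "nat \<Rightarrow> 'a::cstar_algebra"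
  assumes "finite I" "\<forall>i\<in>I. \<forall>j\<in>I. i \<noteq> j \<longrightarrow> b i * b j = 0"
  shows "(sum b I)^2 = (\<Sum>i\<in>I. (b i)^2)"
proof -
  have "(sum b I)^2 = (\<Sum>i\<in>I. \<Sum>j\<in>I. b i * b j)"
    by (simp add: power2_eq_square sum_product)
  also have "\<dots> = (\<Sum>i\<in>I. \<Sum>j\<in>I. if j = i then b i * b i else 0)"
    by (rule sum.cong[OF refl], rule sum.cong[OF refl]) (use assms in auto)
  also have "\<dots> = (\<Sum>i\<in>I. (b i)^2)" using assms(1) by (simp add: power2_eq_square)
  finally show ?thesis .
qed

lemma pow_orth:
  fixes a b :: "'a::cstar_algebra"
  assumes "a * b = 0"
  shows "a ^ Suc m * b ^ Suc n = 0"
proof -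
  have "a ^ Suc m * b ^ Suc n = a ^ m * (a * b) * b ^ n"
    unfolding power_Suc2[of a m] power_Suc[of b n] by (simp add: mult.assoc)
  then show ?thesis using assms by simp
qed

lemma sa_norm_pow:
  fixes b :: "'a::cstar_algebra"
  assumes "cstar b = b"
  shows "norm (b ^ (2^n)) = norm b ^ (2^n)"
proof (induction n)
  case 0 then show ?case by simp
next
  case (Suc n)
  let ?c = "b ^ (2^n)"
  have cc: "cstar ?c = ?c" using assms by (simp add: cstar_power)
  have "b ^ (2^Suc n) = cstar ?c * ?c" using cc
    by (simp add: power_mult[symmetric] power_add[symmetric] mult_2)
  then have "norm (b ^ (2^Suc n)) = (norm ?c)^2" by (simp add: cstar_identity)
  also have "\<dots> = norm b ^ (2^Suc n)" using Suc by (simp add: power_mult[symmetric] mult.commute)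
  finally show ?case .
qed



lemma sa_orth_sum_norm:
  fixes a :: "nat \<Rightarrow> 'a::cstar_algebra"
  assumes fin: "finite I"
    and sa: "\<forall>i\<in>I. cstar (a i) = a i"
    and orth: "\<forall>i\<in>I. \<forall>j\<in>I. i \<noteq> j \<longrightarrow> a i * a j = 0"
    and bd: "\<forall>i\<in>I. norm (a i) \<le> M" and M: "0 \<le> M"
  shows "norm (sum a I) \<le> M"
proof -
  have pw: "(sum a I) ^ (2^n) = (\<Sum>i\<in>I. a i ^ (2^n))" for n
  proof (induction n)
    case 0 then show ?case by simp
  next
    case (Suc n)
    obtain m where m: "2^n = Suc m" using not0_implies_Suc[of "2^n"] by auto
    have "(sum a I) ^ (2^Suc n) = ((sum a I) ^ (2^n))^2"
      by (simp add: power_mult[symmetric] mult.commute)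
    also have "\<dots> = (\<Sum>i\<in>I. (a i ^ (2^n))^2)" unfolding Suc
    proof (rule sum_sq_orth[OF fin], intro ballI impI)
      fix i j assume "i \<in> I" "j \<in> I" "i \<noteq> j"
      then have "a i * a j = 0" using orth by blast
      then show "a i ^ 2 ^ n * a j ^ 2 ^ n = 0" unfolding m by (rule pow_orth)
    qed
    also have "\<dots> = (\<Sum>i\<in>I. a i ^ (2^Suc n))"
      by (simp add: power_mult[symmetric] mult.commute)
    finally show ?case .
  qed
  have saS: "cstar (sum a I) = sum a I" using sa by (simp add: cstar_sum)
  have ineq: "norm (sum a I) ^ (2^n) \<le> real (card I) * M ^ (2^n)" for n
  proof -
    have "norm (sum a I) ^ (2^n) = norm (\<Sum>i\<in>I. a i ^ (2^n))"
      using sa_norm_pow[OF saS, of n] pw[of n] by simp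
    also have "\<dots> \<le> (\<Sum>i\<in>I. norm (a i ^ (2^n)))" by (rule norm_sum)
    also have "\<dots> \<le> (\<Sum>i\<in>I. M ^ (2^n))"
    proof (rule sum_mono)
      fix i assume "i \<in> I"
      have "norm (a i ^ (2^n)) \<le> norm (a i) ^ (2^n)" by (rule norm_power_ineq)
      also have "\<dots> \<le> M ^ (2^n)" using bd \<open>i \<in> I\<close> by (intro power_mono) auto
      finally show "norm (a i ^ (2^n)) \<le> M ^ (2^n)" .
    qed
    also have "\<dots> = real (card I) * M ^ (2^n)" by simp
    finally show ?thesis .
  qed
  show ?thesis
  proof (rule ccontr)
    assume "\<not> ?thesis"
    then have gt: "norm (sum a I) > M" by simp
    show False
    proof (cases "M = 0")
      case True
      then show False using ineq[of 0] gt by simp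
    next
      case False
      then have Mp: "M > 0" using M by simp
      define r where "r = norm (sum a I) / M"
      have r1: "r > 1" using gt Mp by (simp add: r_def)
      obtain n where n: "real (card I) < r ^ n" using real_arch_pow[OF r1] by blast
      have "r ^ n \<le> r ^ (2^n)"
        by (rule power_increasing) (use r1 less_exp[of n] in auto)
      also have "\<dots> = norm (sum a I) ^ (2^n) / M ^ (2^n)" by (simp add: r_def power_divide)
      also have "\<dots> \<le> real (card I)" using ineq[of n] Mp by (simp add: divide_le_eq)
      finally show False using n by simp
    qed
  qed
qed

lemma orth_sum_norm:
  fixes D :: "nat \<Rightarrow> 'a::cstar_algebra"
  assumes fin: "finite I"
    and pp: "\<forall>i\<in>I. projection (p i)" and qp: "\<forall>i\<in>I. projection (q i)"
    and po: "\<forall>i\<in>I. \<forall>j\<in>I. i \<noteq> j \<longrightarrow> p i * p j = 0"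
    and qo: "\<forall>i\<in>I. \<forall>j\<in>I. i \<noteq> j \<longrightarrow> q i * q j = 0"
    and Dp: "\<forall>i\<in>I. p i * D i = D i" and Dq: "\<forall>i\<in>I. D i * q i = D i"
    and bd: "\<forall>i\<in>I. norm (D i) \<le> M" and M: "0 \<le> M"
  shows "norm (sum D I) \<le> M"
proof -
  define a where "a i = cstar (D i) * D i" for i
  have "cstar (sum D I) * sum D I = (\<Sum>i\<in>I. \<Sum>j\<in>I. cstar (D i) * D j)"
    by (simp add: cstar_sum sum_product)
  also have "\<dots> = (\<Sum>i\<in>I. \<Sum>j\<in>I. if j = i then a i else 0)"
  proof (rule sum.cong[OF refl], rule sum.cong[OF refl])
    fix i j assume ij: "i \<in> I" "j \<in> I"
    show "cstar (D i) * D j = (if j = i then a i else 0)"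
    proof (cases "j = i")
      case False
      have "cstar (D i) * D j = cstar (p i * D i) * (p j * D j)" using Dp ij by simp
      also have "\<dots> = cstar (D i) * (p i * p j) * D j"
        using pp ij by (simp add: cstar_mult projection_def mult.assoc)
      finally show ?thesis using False po ij by simp
    qed (simp add: a_def)
  qed
  also have "\<dots> = sum a I" using fin by simp
  finally have xx: "cstar (sum D I) * sum D I = sum a I" .
  have "norm (sum a I) \<le> M^2"
  proof (rule sa_orth_sum_norm[OF fin])
    show "\<forall>i\<in>I. cstar (a i) = a i" by (simp add: a_def cstar_mult cstar_cstar)
    show "\<forall>i\<in>I. \<forall>j\<in>I. i \<noteq> j \<longrightarrow> a i * a j = 0"
    proof (intro ballI impI)
      fix i j assume ij: "i \<in> I" "j \<in> I" "i \<noteq> j"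
      have "a i * a j = cstar (D i) * (D i * q i) * cstar (D j * q j) * D j"
        using Dq ij by (simp add: a_def mult.assoc)
      also have "\<dots> = cstar (D i) * D i * (q i * q j) * cstar (D j) * D j"
        using qp ij by (simp add: cstar_mult projection_def mult.assoc)
      finally show "a i * a j = 0" using qo ij by simp
    qed
    show "\<forall>i\<in>I. norm (a i) \<le> M^2"
    proof
      fix i assume "i \<in> I"
      have "norm (a i) = (norm (D i))^2" by (simp add: a_def cstar_identity)
      also have "\<dots> \<le> M^2" using bd \<open>i \<in> I\<close> by (intro power_mono) auto
      finally show "norm (a i) \<le> M^2" .
    qed
  qed simp
  moreover have "(norm (sum D I))^2 = norm (sum a I)"
    using cstar_identity[of "sum D I"] unfolding xx by (rule sym)
  ultimately have "(norm (sum D I))^2 \<le> M^2" by linarith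
  then show ?thesis using M by (rule power2_le_imp_le)
qed



lemma norm4:
  fixes a b c d :: "'a::cstar_algebra"
  assumes "norm a \<le> 1" "norm b \<le> 1" "norm d \<le> 1"
  shows "norm (a * b * c * d) \<le> norm c"
proof -
  have ab: "norm (a * b) \<le> 1"
    using norm_mult_ineq[of a b] mult_le_one[OF assms(1) norm_ge_zero assms(2)] by linarith
  have "norm (a * b * c * d) \<le> norm (a * b * c) * norm d" by (rule norm_mult_ineq)
  also have "\<dots> \<le> norm (a * b * c)" by (rule mult_left_le[OF assms(3) norm_ge_zero])
  also have "\<dots> \<le> norm (a * b) * norm c" by (rule norm_mult_ineq)
  also have "\<dots> \<le> 1 * norm c" by (rule mult_right_mono[OF ab norm_ge_zero])
  finally show ?thesis by simp
qed

theorem lemma2p12: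
  fixes k :: nat
    and e :: "nat \<Rightarrow> 'a::cstar_algebra"
    and u zz :: 'a
    and z :: "nat \<Rightarrow> 'a"
    and B :: "'a set"
  assumes k: "k > 1"
    and proj: "\<forall>i\<in>{1..k}. projection (e i)"
    and orth: "\<forall>i\<in>{1..k}. \<forall>j\<in>{1..k}. i \<noteq> j \<longrightarrow> e i * e j = 0"
    and u: "unitary u"
    and shift: "\<forall>i\<in>{1..<k}. cstar u * e i * u = e (i + 1)"
    and shift_last: "cstar u * e k * u = e 1"
    and B: "cstar_subalgebra B" "finite_dimensional B" "B \<subseteq> corner (e 1)"
    and zz: "zz \<in> corner_unitaries0 (e 1)"
    and zzB: "\<forall>b\<in>B. cstar zz * cstar (u ^ k) * b * u ^ k * zz = b"
    and zi: "\<forall>i\<in>{1..<k}. z i \<in> corner_unitaries (e 1)"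
    and zprod: "zz = prod_list (map z [1..<k])"
  shows "let z' = (\<lambda>i. if i = k then e 1 else z i);
             w = (\<Sum>i=1..k. e i * u ^ (k + 1 - i) * z' i * cstar (u ^ (k - i)))
                 + (1 - (\<Sum>i=1..k. e i)) * u
         in norm (w - u) \<le> Max ((\<lambda>i. norm (z i - e 1)) ` {1..k-1})
            \<and> (\<forall>i\<in>{1..k-1}. cstar (w ^ i) * e 1 * w ^ i = e (i + 1))
            \<and> (\<forall>b\<in>B. cstar (w ^ k) * b * w ^ k = b)"
proof -
  have ep: "e i * e i = e i" "cstar (e i) = e i" if "i \<in> {1..k}" for i
    using proj that by (auto simp: projection_def)
  have p1: "projection (e 1)" using proj k by auto
  have e11: "e 1 * e 1 = e 1" and ce1: "cstar (e 1) = e 1" using ep[of 1] k by auto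
  have uu: "cstar u * u = 1" "u * cstar u = 1" using u by (auto simp: unitary_def)
  have UP: "cstar (u^n) * u^n = 1" "u^n * cstar (u^n) = 1" for n
    using unitary_power[OF u, of n] by auto
  have S1: "e i * u = u * e (i+1)" if "1 \<le> i" "i < k" for i
  proof -
    have "e i * u = (u * cstar u) * e i * u" using uu by simp
    also have "\<dots> = u * (cstar u * e i * u)" by (simp add: mult.assoc)
    also have "\<dots> = u * e (i+1)" using shift that by simp
    finally show ?thesis .
  qed
  have S2: "e k * u = u * e 1"
  proof -
    have "e k * u = (u * cstar u) * e k * u" using uu by simp
    also have "\<dots> = u * (cstar u * e k * u)" by (simp add: mult.assoc)
    also have "\<dots> = u * e 1" using shift_last by simp
    finally show ?thesis .
  qed
  have S3: "e i * u^m = u^m * e (i+m)" if "1 \<le> i" "i + m \<le> k" for i m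
    using that
  proof (induction m)
    case 0 then show ?case by simp
  next
    case (Suc m)
    have "e i * u^Suc m = (e i * u^m) * u" by (simp add: power_commutes mult.assoc)
    also have "\<dots> = u^m * (e (i+m) * u)" using Suc by (simp add: mult.assoc)
    also have "\<dots> = u^m * (u * e (i+m+1))" using S1[of "i+m"] Suc.prems by simp
    also have "\<dots> = u^Suc m * e (i + Suc m)" by (simp add: power_commutes mult.assoc[symmetric])
    finally show ?case .
  qed
  have S4: "e j * u^(k+1-j) = u^(k+1-j) * e 1" if "1 \<le> j" "j \<le> k" for j
  proof -
    have pw: "u^(k+1-j) = u^(k-j) * u" using that by (simp add: Suc_diff_le power_commutes)
    have "e j * u^(k+1-j) = (e j * u^(k-j)) * u" unfolding pw by (simp add: mult.assoc)
    also have "\<dots> = u^(k-j) * (e k * u)" using S3[of j "k-j"] that by (simp add: mult.assoc)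
    also have "\<dots> = u^(k+1-j) * e 1" unfolding pw by (simp add: S2 mult.assoc)
    finally show ?thesis .
  qed
  have C0: "u^(k-m) * e 1 = e (m+1) * u^(k-m)" if "m < k" for m
    using S4[of "m+1"] that by simp
  have C1: "e 1 * cstar (u^(k-m)) = cstar (u^(k-m)) * e (m+1)" if "m < k" for m
  proof -
    have "e 1 * cstar (u^(k-m)) = cstar (u^(k-m) * e 1)" by (simp only: cstar_mult ce1)
    also have "\<dots> = cstar (e (m+1) * u^(k-m))" using C0 that by simp
    also have "\<dots> = cstar (u^(k-m)) * e (m+1)" using ep[of "m+1"] that by (simp add: cstar_mult)
    finally show ?thesis .
  qed

  define z' where "z' = (\<lambda>i. if i = k then e 1 else z i)"
  have zc: "e 1 * z' j = z' j" "z' j * e 1 = z' j" "cstar (z' j) * z' j = e 1"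
    if "j \<in> {1..k}" for j
  proof -
    have "z' j \<in> corner (e 1) \<and> cstar (z' j) * z' j = e 1"
    proof (cases "j = k")
      case True
      have "e 1 \<in> corner (e 1)" unfolding corner_def using e11 by (metis (mono_tags, lifting) mem_Collect_eq)
      then show ?thesis using True e11 ce1 by (simp add: z'_def)
    next
      case False
      then have "z j \<in> corner_unitaries (e 1)" using zi that by auto
      then show ?thesis using False by (simp add: z'_def corner_unitaries_def)
    qed
    then show "e 1 * z' j = z' j" "z' j * e 1 = z' j" "cstar (z' j) * z' j = e 1"
      using corner_mult[OF p1] by auto
  qed
  define T where "T j = e j * u ^ (k + 1 - j) * z' j * cstar (u ^ (k - j))" for j
  have T_eq: "T j = u^(k+1-j) * z' j * cstar (u^(k-j))" if "j \<in> {1..k}" for j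
  proof -
    have "T j = (e j * u ^ (k + 1 - j)) * z' j * cstar (u ^ (k - j))" by (simp add: T_def)
    also have "\<dots> = u ^ (k + 1 - j) * (e 1 * z' j) * cstar (u ^ (k - j))"
      using S4[of j] that by (simp add: mult.assoc)
    also have "\<dots> = u^(k+1-j) * z' j * cstar (u^(k-j))" using zc[OF that] by simp
    finally show ?thesis .
  qed
  define G where "G j = u^(k-j) * e 1 * cstar (u^(k-j))" for j
  have TT: "cstar (T j) * T j = G j" if "j \<in> {1..k}" for j
  proof -
    have "cstar (T j) * T j = u^(k-j) * cstar (z' j) * (cstar (u^(k+1-j)) * u^(k+1-j)) * z' j * cstar (u^(k-j))"
      unfolding T_eq[OF that] by (simp add: cstar_mult cstar_cstar mult.assoc)
    also have "\<dots> = u^(k-j) * (cstar (z' j) * z' j) * cstar (u^(k-j))" by (simp add: UP mult.assoc)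
    also have "\<dots> = G j" using zc[OF that] by (simp add: G_def)
    finally show ?thesis .
  qed
  have G1: "G j = e (j+1)" if "j < k" for j
  proof -
    have "G j = e (j+1) * (u^(k-j) * cstar (u^(k-j)))" using C0[OF that] by (simp add: G_def mult.assoc)
    then show ?thesis by (simp add: UP)
  qed
  have G2: "G k = e 1" by (simp add: G_def cstar_one)
  define E where "E = (\<Sum>i=1..k. e i)"
  define w where "w = (\<Sum>i=1..k. T i) + (1 - E) * u"
  have eT: "e j * T i = (if i = j then T i else 0)" if "i \<in> {1..k}" "j \<in> {1..k}" for i j
  proof (cases "i = j")
    case True
    then show ?thesis using ep[OF that(1)] by (simp add: T_def mult.assoc[symmetric])
  next
    case False
    then have "e j * e i = 0" using orth that by auto
    then show ?thesis using False by (simp add: T_def mult.assoc[symmetric])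
  qed
  have eE: "e j * E = e j" if "j \<in> {1..k}" for j
  proof -
    have "e j * E = (\<Sum>i=1..k. e j * e i)" by (simp add: E_def sum_distrib_left)
    also have "\<dots> = (\<Sum>i=1..k. if i = j then e j else 0)"
      by (rule sum.cong[OF refl]) (use orth ep[OF that] that in auto)
    also have "\<dots> = e j" using that by simp
    finally show ?thesis .
  qed
  have eW: "e j * w = T j" if "j \<in> {1..k}" for j
  proof -
    have "e j * w = (\<Sum>i=1..k. e j * T i) + (e j - e j * E) * u"
      by (simp add: w_def sum_distrib_left distrib_left right_diff_distrib mult.assoc[symmetric])
    also have "\<dots> = (\<Sum>i=1..k. if i = j then T i else 0)"
    proof -
      have "(\<Sum>i=1..k. e j * T i) = (\<Sum>i=1..k. if i = j then T i else 0)"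
        by (rule sum.cong[OF refl]) (use eT that in blast)
      then show ?thesis using eE[OF that] by simp
    qed
    also have "\<dots> = T j" using that by simp
    finally show ?thesis .
  qed
  have W1: "cstar w * e j * w = G j" if "j \<in> {1..k}" for j
  proof -
    have "cstar (e j * w) * (e j * w) = cstar w * (e j * e j) * w"
      by (simp only: cstar_mult ep(2)[OF that] mult.assoc)
    then have "cstar w * e j * w = cstar (e j * w) * (e j * w)"
      using ep(1)[OF that] by simp
    then show ?thesis using eW[OF that] TT[OF that] by simp
  qed

  have cl2: "cstar (w ^ i) * e 1 * w ^ i = e (i + 1)" if "i < k" for i
    using that
  proof (induction i)
    case 0 then show ?case by (simp add: cstar_one)
  next
    case (Suc i)
    have "cstar (w ^ Suc i) * e 1 * w ^ Suc i = cstar w * (cstar (w ^ i) * e 1 * w ^ i) * w"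
      by (simp only: power_Suc2 cstar_mult mult.assoc)
    also have "\<dots> = cstar w * e (i + 1) * w" using Suc by simp
    also have "\<dots> = G (i + 1)" using W1[of "i+1"] Suc.prems by simp
    also have "\<dots> = e (Suc i + 1)" using G1[of "i+1"] Suc.prems by simp
    finally show ?case .
  qed
  define Zp where "Zp m = prod_list (map z' [1..<Suc m])" for m
  have ZpS: "Zp (Suc m) = Zp m * z' (Suc m)" for m
    by (simp add: Zp_def)
  have ZpE: "Zp m * e 1 = Zp m" if h: "1 \<le> m" "m \<le> k" for m
  proof -
    obtain n where n: "m = Suc n" using h by (cases m) auto
    have "Zp m * e 1 = Zp n * (z' m * e 1)" by (simp add: n ZpS mult.assoc)
    also have "\<dots> = Zp m" using zc(2)[of m] h by (simp add: n ZpS)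
    finally show ?thesis .
  qed
  have e1W: "e 1 * w ^ m = u^k * Zp m * cstar (u^(k-m))" if "1 \<le> m" "m \<le> k" for m
    using that
  proof (induction m)
    case 0 then show ?case by simp
  next
    case (Suc m)
    show ?case
    proof (cases "m = 0")
      case True
      have "e 1 * w ^ Suc m = T 1" using eW[of 1] k True by simp
      also have "\<dots> = u^k * Zp (Suc m) * cstar (u^(k - Suc m))"
        using T_eq[of 1] k True by (simp add: Zp_def)
      finally show ?thesis .
    next
      case False
      then have m1: "1 \<le> m" "m < k" using Suc.prems by auto
      have "e 1 * w ^ Suc m = (e 1 * w ^ m) * w" by (simp only: power_Suc2 mult.assoc)
      also have "\<dots> = u^k * (Zp m * e 1) * cstar (u^(k-m)) * w"
        using Suc.IH m1 ZpE[of m] by (simp add: mult.assoc)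
      also have "\<dots> = u^k * Zp m * cstar (u^(k-m)) * (e (m+1) * w)"
        using C1[of m] m1 by (simp add: mult.assoc)
      also have "\<dots> = u^k * Zp m * (cstar (u^(k-m)) * u^(k-m)) * z' (Suc m) * cstar (u^(k - Suc m))"
        using eW[of "m+1"] T_eq[of "m+1"] m1 by (simp add: mult.assoc)
      also have "\<dots> = u^k * Zp (Suc m) * cstar (u^(k - Suc m))"
        by (simp add: UP ZpS mult.assoc)
      finally show ?thesis .
    qed
  qed
  have zzc: "zz \<in> corner (e 1)"
    using zz connected_component_subset[of "corner_unitaries (e 1)" "e 1"]
    unfolding corner_unitaries0_def corner_unitaries_def by auto
  have Zpk: "Zp k = zz"
  proof -
    have mz: "map z' [1..<k] = map z [1..<k]" by (auto simp: z'_def)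
    have ul: "[1..<Suc k] = [1..<k] @ [k]" using k by simp
    have "Zp k = prod_list (map z' [1..<k]) * z' k"
      unfolding Zp_def ul by simp
    also have "\<dots> = zz * e 1" unfolding mz zprod by (simp add: z'_def)
    also have "\<dots> = zz" using corner_mult[OF p1 zzc] by simp
    finally show ?thesis .
  qed
  have e1Wk: "e 1 * w ^ k = u^k * zz"
    using e1W[of k] k Zpk by (simp add: cstar_one)
  have cl3: "cstar (w ^ k) * b * w ^ k = b" if "b \<in> B" for b
  proof -
    have bc: "e 1 * b = b" "b * e 1 = b" using corner_mult[OF p1] B(3) that by auto
    have "cstar (w ^ k) * b * w ^ k = cstar (w ^ k) * (e 1 * b * e 1) * w ^ k" using bc by simp
    also have "\<dots> = cstar (e 1 * w ^ k) * b * (e 1 * w ^ k)"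
      by (simp only: cstar_mult ce1 mult.assoc)
    also have "\<dots> = cstar zz * cstar (u ^ k) * b * u ^ k * zz"
      by (simp only: e1Wk cstar_mult mult.assoc)
    also have "\<dots> = b" using zzB that by simp
    finally show ?thesis .
  qed

  define D where "D i = e i * u ^ (k + 1 - i) * (z' i - e 1) * cstar (u ^ (k - i))" for i
  have TD: "T i - e i * u = D i" if "i \<in> {1..k}" for i
  proof -
    have pw: "u^(k+1-i) = u * u^(k-i)" using that by (simp add: Suc_diff_le)
    have a: "e i * u ^ (k + 1 - i) * e 1 = e i * u ^ (k + 1 - i)"
      using S4[of i] that e11 by (simp add: mult.assoc)
    have b: "e i * u ^ (k + 1 - i) * cstar (u ^ (k - i)) = e i * u"
      unfolding pw by (simp add: mult.assoc UP)
    have "D i = T i - e i * u ^ (k + 1 - i) * e 1 * cstar (u ^ (k - i))"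
      by (simp add: D_def T_def right_diff_distrib left_diff_distrib)
    also have "\<dots> = T i - e i * u" using a b by simp
    finally show ?thesis by simp
  qed
  have wu: "w - u = (\<Sum>i=1..k. D i)"
  proof -
    have "w - u = (\<Sum>i=1..k. T i) + (u - E * u) - u" unfolding w_def left_diff_distrib by simp
    also have "\<dots> = (\<Sum>i=1..k. T i) - E * u" by (simp add: algebra_simps)
    also have "\<dots> = (\<Sum>i=1..k. T i - e i * u)"
      by (simp add: E_def sum_distrib_right sum_subtractf)
    also have "\<dots> = (\<Sum>i=1..k. D i)" by (rule sum.cong[OF refl]) (use TD in blast)
    finally show ?thesis .
  qed
  have Dk: "D k = 0" by (simp add: D_def z'_def)
  have wu2: "w - u = (\<Sum>i\<in>{1..k-1}. D i)"
  proof -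
    obtain n where n: "k = Suc n" using k by (cases k) auto
    have "{1..k} = insert k {1..k-1}" using n by auto
    then have "(\<Sum>i=1..k. D i) = D k + (\<Sum>i\<in>{1..k-1}. D i)" using n by (simp add: sum.insert)
    then show ?thesis using wu Dk by simp
  qed
  define M where "M = Max ((\<lambda>i. norm (z i - e 1)) ` {1..k-1})"
  have Mge: "norm (z i - e 1) \<le> M" if "i \<in> {1..k-1}" for i
    unfolding M_def by (rule Max_ge) (use that in auto)
  have M0: "0 \<le> M"
  proof -
    have "(1::nat) \<in> {1..k-1}" using k by auto
    then have "norm (z 1 - e 1) \<le> M" by (rule Mge)
    then show ?thesis using norm_ge_zero[of "z 1 - e 1"] by linarith
  qed
  have cl1: "norm (w - u) \<le> M"
    unfolding wu2
  proof (rule orth_sum_norm[where p = e and q = "\<lambda>i. e (i+1)"])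
    show "finite {1..k-1}" by simp
    show "\<forall>i\<in>{1..k-1}. projection (e i)" using proj by auto
    show "\<forall>i\<in>{1..k-1}. projection (e (i+1))" using proj by auto
    show "\<forall>i\<in>{1..k-1}. \<forall>j\<in>{1..k-1}. i \<noteq> j \<longrightarrow> e i * e j = 0" using orth by auto
    show "\<forall>i\<in>{1..k-1}. \<forall>j\<in>{1..k-1}. i \<noteq> j \<longrightarrow> e (i+1) * e (j+1) = 0" using orth by auto
    show "\<forall>i\<in>{1..k-1}. e i * D i = D i"
    proof
      fix i assume i: "i \<in> {1..k-1}"
      then have "e i * e i = e i" using ep[of i] by auto
      then show "e i * D i = D i" by (simp add: D_def mult.assoc[symmetric])
    qed
    show "\<forall>i\<in>{1..k-1}. D i * e (i+1) = D i"
    proof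
      fix i assume i: "i \<in> {1..k-1}"
      then have ik: "i \<in> {1..k}" "i < k" by auto
      have ze: "(z' i - e 1) * e 1 = z' i - e 1" using zc(2)[OF ik(1)] e11 by (simp add: left_diff_distrib)
      have c0: "e 1 * cstar (u ^ (k - i)) = cstar (u ^ (k - i)) * e (i+1)" using C1[OF ik(2)] .
      have "e 1 * (cstar (u ^ (k - i)) * e (i+1)) = cstar (u ^ (k - i)) * (e (i+1) * e (i+1))"
        by (simp only: c0 mult.assoc[symmetric])
      also have "\<dots> = cstar (u ^ (k - i)) * e (i+1)" using ep(1)[of "i+1"] ik by simp
      also have "\<dots> = e 1 * cstar (u ^ (k - i))" using c0 by simp
      finally have c: "e 1 * (cstar (u ^ (k - i)) * e (i+1)) = e 1 * cstar (u ^ (k - i))" .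
      have "D i * e (i+1) = e i * u ^ (k + 1 - i) * ((z' i - e 1) * e 1) * cstar (u ^ (k - i)) * e (i+1)"
        by (simp only: D_def ze)
      also have "\<dots> = e i * u ^ (k + 1 - i) * (z' i - e 1) * (e 1 * cstar (u ^ (k - i)) * e (i+1))"
        by (simp only: mult.assoc)
      also have "\<dots> = e i * u ^ (k + 1 - i) * ((z' i - e 1) * e 1) * cstar (u ^ (k - i))"
        by (simp only: c mult.assoc)
      also have "\<dots> = D i" by (simp only: D_def ze)
      finally show "D i * e (i+1) = D i" .
    qed
    show "\<forall>i\<in>{1..k-1}. norm (D i) \<le> M"
    proof
      fix i assume i: "i \<in> {1..k-1}"
      then have ik: "i \<in> {1..k}" "i < k" by auto
      have "norm (D i) \<le> norm (z' i - e 1)" unfolding D_def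
      proof (rule norm4)
        show "norm (e i) \<le> 1" using proj ik by (auto intro: norm_proj)
        show "norm (u ^ (k + 1 - i)) \<le> 1" using UP by (intro norm_unitary) (simp add: unitary_def)
        show "norm (cstar (u ^ (k - i))) \<le> 1" using UP
          by (intro norm_unitary) (simp add: unitary_def cstar_cstar)
      qed
      also have "\<dots> = norm (z i - e 1)" using ik by (simp add: z'_def)
      also have "\<dots> \<le> M" using Mge[OF i] .
      finally show "norm (D i) \<le> M" .
    qed
    show "0 \<le> M" by (rule M0)
  qed
  show ?thesis
    unfolding Let_def z'_def[symmetric] T_def[symmetric] E_def[symmetric] w_def[symmetric] M_def[symmetric]
    using cl1 cl2 cl3 by auto
qed

end
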